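(* Consider the one-stage ANC game described in the context, at a given initial pair $(x,s)$. Suppose that for every $x\in\mathbb{R}^n$, $a\in\mathcal{A}$ the functions $u\mapsto\Sigma(F(x,0),u,a)$ and $u\mapsto\Sigma(F(x,u),u,a)$ are continuous, coercive and convex on $\mathbb{R}^m$. Suppose further that there is a reserved action $a_\circ\in\mathcal{A}$, $a_\circ\ne1$, such that for any $j,k\in\mathcal{A}\setminus\{a_\circ\}$ with $j<k$ one has $h^{x,s}_j(u)>h^{x,s}_k(u)$ for all $u\in\mathring{U}(x)$. Suppose that there exists $u^*=u^*(x,s)\in\mathring{U}(x)$ such that (a) $h^{x,s}_1(u^* )=h^{x,s}_{a_\circ}(u^* )$; (b) for all $u\ne u^*$, $h^{x,s}_1(u)>h^{x,s}_1(u^* )$ or $h^{x,s}_{a_\circ}(u)>h^{x,s}_{a_\circ}(u^* )$; (c) $u^*$ is not a minimum of $h^{x,s}_1(\cdot)$ nor of $h^{x,s}_{a_\circ}(\cdot)$. Then the game admits a non-pure saddle point $(u^*,p^* )$ with $p^*$ supported on $\{1,a_\circ\}$.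
   Context: Setting (one-stage ANC game). Let $\mathcal{F}=\{1,\dots,|\mathcal{F}|\}$ be a finite set of regimes and $\mathcal{A}=\{1,\dots,N\}$ a finite set of jammer actions; for each $a$ let $P(a)$ be an $|\mathcal{F}|\times|\mathcal{F}|$ row-stochastic matrix; $q\in[0,1]^{|\mathcal{F}|}$. Let $F:\mathbb{R}^n\times\mathbb{R}^m\to\mathbb{R}^n$, $\sigma^0,\sigma^1,g^0$ real-valued on $\mathbb{R}^n\times\mathbb{R}^m$, $\mathbb{R}^n$, $\mathcal{A}\times\mathcal{F}$ respectively. For plant state $x$ and regime $s$, the controller chooses $u\in\mathbb{R}^m$, the jammer chooses $p\in\mathcal{S}_{N-1}$ (unit simplex in $\mathbb{R}^N$); $a\sim p$, $\mathrm{Pr}(s^+=i)=P_{si}(a)$, $\mathrm{Pr}(b=1\mid s^+)=q_{s^+}$, $x^+=F(x,bu)$; payoff $\Sigma(x^+,u,a)=\sigma^0(x,u)+\sigma^1(x^+)-g^0(a,s)$ with expectation $p'h^{x,s}(u)$, $h^{x,s}_i(u)=(P(i)q)_s\Sigma(F(x,u),u,i)+(1-(P(i)q)_s)\Sigma(F(x,0),u,i)$. $J_1=\inf_{u}\sup_pp'h^{x,s}(u)$, $J_2=\sup_p\inf_up'h^{x,s}(u)$. $U(x)\subset\mathbb{R}^m$ is a compact set containing the controller's optimal response and satisfying $J_1=\inf_{u\in U(x)}\sup_pp'h^{x,s}(u)=\sup_p\inf_{u\in U(x)}p'h^{x,s}(u)=J_2$ (such a set exists under the stated continuity/coercivity/convexity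 assumption); $\mathring{U}(x)$ is its interior. A saddle point is $(u^*,p^* )$ with $p'h^{x,s}(u^* )\le(p^* )'h^{x,s}(u^* )\le(p^* )'h^{x,s}(u)$ for all $u,p$; non-pure means $p^*$ has at least two positive components; supported on a set means zero outside it. Coercive: $h(u)\ge\eta(\|u\|)$ with $\eta(y)\to+\infty$. *)

theory Defs
  imports "HOL-Analysis.Analysis"
begin

text \<open>Regimes are {1..nF}, jammer actions are {1..N}.
  P a i j is the (i,j) entry of the row-stochastic matrix P(a).\<close>

definition simplexN :: "nat \<Rightarrow> (nat \<Rightarrow> real) set" where
  "simplexN N = {p. (\<forall>i. 0 \<le> p i) \<and> (\<forall>i. i \<notin> {1..N} \<longrightarrow> p i = 0)
                    \<and> (\<Sum>i\<in>{1..N}. p i) = 1}"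

definition row_stochastic :: "nat \<Rightarrow> (nat \<Rightarrow> nat \<Rightarrow> real) \<Rightarrow> bool" where
  "row_stochastic nF M \<longleftrightarrow> (\<forall>i\<in>{1..nF}. (\<forall>j\<in>{1..nF}. 0 \<le> M i j)
                              \<and> (\<Sum>j\<in>{1..nF}. M i j) = 1)"

definition Pq :: "nat \<Rightarrow> (nat \<Rightarrow> nat \<Rightarrow> nat \<Rightarrow> real) \<Rightarrow> (nat \<Rightarrow> real) \<Rightarrow> nat \<Rightarrow> nat \<Rightarrow> real" where
  "Pq nF P q a s = (\<Sum>j\<in>{1..nF}. P a s j * q j)"

definition Sig :: "('x \<Rightarrow> 'u \<Rightarrow> real) \<Rightarrow> ('x \<Rightarrow> real) \<Rightarrow> (nat \<Rightarrow> nat \<Rightarrow> real)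
     \<Rightarrow> 'x \<Rightarrow> nat \<Rightarrow> 'x \<Rightarrow> 'u \<Rightarrow> nat \<Rightarrow> real" where
  "Sig sigma0 sigma1 g0 x s xp u a = sigma0 x u + sigma1 xp - g0 a s"

definition hfun :: "nat \<Rightarrow> (nat \<Rightarrow> nat \<Rightarrow> nat \<Rightarrow> real) \<Rightarrow> (nat \<Rightarrow> real)
     \<Rightarrow> ('x \<Rightarrow> 'u::zero \<Rightarrow> 'x) \<Rightarrow> ('x \<Rightarrow> 'u \<Rightarrow> real) \<Rightarrow> ('x \<Rightarrow> real) \<Rightarrow> (nat \<Rightarrow> nat \<Rightarrow> real)
     \<Rightarrow> 'x \<Rightarrow> nat \<Rightarrow> nat \<Rightarrow> 'u \<Rightarrow> real" where
  "hfun nF P q F sigma0 sigma1 g0 x s i u =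
     Pq nF P q i s * Sig sigma0 sigma1 g0 x s (F x u) u i
     + (1 - Pq nF P q i s) * Sig sigma0 sigma1 g0 x s (F x 0) u i"

definition payoff :: "nat \<Rightarrow> (nat \<Rightarrow> 'u \<Rightarrow> real) \<Rightarrow> (nat \<Rightarrow> real) \<Rightarrow> 'u \<Rightarrow> real" where
  "payoff N h p u = (\<Sum>i\<in>{1..N}. p i * h i u)"

definition coercive :: "('u::real_normed_vector \<Rightarrow> real) \<Rightarrow> bool" where
  "coercive f \<longleftrightarrow> (\<exists>\<eta>::real \<Rightarrow> real. filterlim \<eta> at_top at_top \<and> (\<forall>u. \<eta> (norm u) \<le> f u))"

definition saddle_point :: "nat \<Rightarrow> (nat \<Rightarrow> 'u \<Rightarrow> real) \<Rightarrow> 'u \<Rightarrow> (nat \<Rightarrow> real) \<Rightarrow> bool" where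
  "saddle_point N h us ps \<longleftrightarrow> ps \<in> simplexN N \<and>
     (\<forall>p\<in>simplexN N. \<forall>u. payoff N h p us \<le> payoff N h ps us \<and> payoff N h ps us \<le> payoff N h ps u)"

definition non_pure :: "nat \<Rightarrow> (nat \<Rightarrow> real) \<Rightarrow> bool" where
  "non_pure N p \<longleftrightarrow> card {i\<in>{1..N}. 0 < p i} \<ge> 2"

definition supported_on :: "(nat \<Rightarrow> real) \<Rightarrow> nat set \<Rightarrow> bool" where
  "supported_on p S \<longleftrightarrow> (\<forall>i. i \<notin> S \<longrightarrow> p i = 0)"

end

theory Submission
  imports Defs
begin

lemma pair_ineq:
  fixes f g :: "'a::real_vector \<Rightarrow> real"
  assumes cf: "convex_on UNIV f" and cg: "convex_on UNIV g"
    and b: "\<forall>u. u \<noteq> us \<longrightarrow> f u > f us \<or> g u > g us"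
    and fa: "f a < f us" and gb: "g b < g us"
  shows "(g b - g us) * (f a - f us) \<le> (g a - g us) * (f b - f us)"
proof (rule ccontr)
  assume H: "\<not> ?thesis"
  have fb: "f b > f us" using b gb by force
  define d where "d = (f b - f us) - (f a - f us)"
  have dpos: "d > 0" using fa fb d_def by simp
  define t where "t = (f us - f a) / d"
  have t0: "0 \<le> t" using dpos fa t_def by simp
  have t1: "t \<le> 1" using dpos fb unfolding t_def by (simp add: divide_le_eq d_def)
  have omt: "1 - t = (f b - f us) / d" using dpos unfolding t_def d_def by (simp add: field_simps)
  define w where "w = (1 - t) *\<^sub>R a + t *\<^sub>R b"
  have fw: "f w \<le> (1 - t) * f a + t * f b" using convex_onD[OF cf t0 t1] w_def by simp
  have gw: "g w \<le> (1 - t) * g a + t * g b" using convex_onD[OF cg t0 t1] w_def by simp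
  have e1: "(1 - t) * f a + t * f b - f us = (1-t) * (f a - f us) + t * (f b - f us)"
    by (simp add: algebra_simps)
  have e1': "(1-t) * (f a - f us) + t * (f b - f us) = 0"
    unfolding omt t_def using dpos by (simp add: field_simps d_def)
  have e2: "(1 - t) * g a + t * g b - g us = (1-t) * (g a - g us) + t * (g b - g us)"
    by (simp add: algebra_simps)
  have e2': "(1-t) * (g a - g us) + t * (g b - g us)
      = ((f b - f us) * (g a - g us) - (f a - f us) * (g b - g us)) / d"
  proof -
    have m1: "(1-t) * d = f b - f us" using omt dpos by simp
    have m2: "t * d = f us - f a" using dpos t_def by simp
    have "((1-t) * (g a - g us) + t * (g b - g us)) * d
        = (f b - f us) * (g a - g us) - (f a - f us) * (g b - g us)"
    proof -
      have "((1-t) * (g a - g us) + t * (g b - g us)) * d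
          = ((1-t) * d) * (g a - g us) + (t * d) * (g b - g us)" by (simp add: algebra_simps)
      also have "\<dots> = (f b - f us) * (g a - g us) + (f us - f a) * (g b - g us)" by (simp only: m1 m2)
      finally show ?thesis by (simp add: algebra_simps)
    qed
    thus ?thesis using dpos by (simp add: eq_divide_eq)
  qed
  have "((f b - f us) * (g a - g us) - (f a - f us) * (g b - g us)) / d < 0"
    using H dpos by (simp add: divide_neg_pos algebra_simps)
  hence gw': "g w < g us" using gw e2 e2' by linarith
  have fw': "f w \<le> f us" using fw e1 e1' by linarith
  have "w \<noteq> us" using gw' by auto
  thus False using b fw' gw' by force
qed

lemma key:
  fixes f g :: "'a::real_vector \<Rightarrow> real"
  assumes cf: "convex_on UNIV f" and cg: "convex_on UNIV g"
    and eq: "f us = g us"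
    and b: "\<forall>u. u \<noteq> us \<longrightarrow> f u > f us \<or> g u > g us"
    and c: "\<not> (\<forall>u. f us \<le> f u) \<and> \<not> (\<forall>u. g us \<le> g u)"
  shows "\<exists>l. 0 < l \<and> l < 1 \<and> (\<forall>u. f us \<le> l * f u + (1 - l) * g u)"
proof -
  obtain a0 where a0: "f a0 < f us" using c by (meson not_le)
  obtain b0 where b0: "g b0 < g us" using c by (meson not_le)
  define L where "L = (\<lambda>b. (g us - g b) / ((f b - f us) - (g b - g us))) ` {b. g b < g us}"
  define R where "R = (\<lambda>a. (g a - g us) / ((g a - g us) - (f a - f us))) ` {a. f a < f us}"
  have LR: "l \<le> r" if lL: "l \<in> L" and rR: "r \<in> R" for l r
  proof -
    obtain b where bb: "g b < g us" "l = (g us - g b) / ((f b - f us) - (g b - g us))"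
      using lL unfolding L_def by blast
    obtain a where aa: "f a < f us" "r = (g a - g us) / ((g a - g us) - (f a - f us))"
      using rR unfolding R_def by blast
    have fb: "f b > f us" using b bb by force
    have ga: "g a > g us" using b aa by force
    have p: "(g b - g us) * (f a - f us) \<le> (g a - g us) * (f b - f us)"
      using pair_ineq[OF cf cg b aa(1) bb(1)] .
    have d1: "(f b - f us) - (g b - g us) > 0" using fb bb by simp
    have d2: "(g a - g us) - (f a - f us) > 0" using ga aa by simp
    show ?thesis unfolding bb(2) aa(2) using d1 d2 p
      by (simp add: divide_simps) (simp add: algebra_simps)
  qed
  have Lne: "L \<noteq> {}" using b0 L_def by auto
  have Rne: "R \<noteq> {}" using a0 R_def by auto
  obtain r0 where r0: "r0 \<in> R" using Rne by auto
  have bddL: "bdd_above L" by (rule bdd_aboveI[where M=r0]) (rule LR, assumption, rule r0)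
  define l where "l = Sup L"
  have lge: "x \<le> l" if "x \<in> L" for x using cSup_upper[OF that bddL] l_def by simp
  have lle: "l \<le> r" if "r \<in> R" for r using cSup_least[OF Lne] LR that l_def by blast
  have fb0: "f b0 > f us" using b b0 by force
  have ga0: "g a0 > g us" using b a0 by force
  have "(g us - g b0) / ((f b0 - f us) - (g b0 - g us)) \<in> L" using b0 L_def by auto
  moreover have "(g us - g b0) / ((f b0 - f us) - (g b0 - g us)) > 0" using b0 fb0 by simp
  ultimately have lpos: "l > 0" using lge by fastforce
  have "(g a0 - g us) / ((g a0 - g us) - (f a0 - f us)) \<in> R" using a0 R_def by auto
  moreover have "(g a0 - g us) / ((g a0 - g us) - (f a0 - f us)) < 1" using a0 ga0 by simp
  ultimately have l1: "l < 1" using lle by fastforce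
  have "f us \<le> l * f u + (1 - l) * g u" for u
  proof -
    consider "f u < f us" | "g u < g us" | "f u \<ge> f us" "g u \<ge> g us" by linarith
    then show ?thesis
    proof cases
      case 1
      have gu: "g u > g us" using b 1 by force
      have "(g u - g us) / ((g u - g us) - (f u - f us)) \<in> R" using 1 R_def by auto
      hence "l \<le> (g u - g us) / ((g u - g us) - (f u - f us))" by (rule lle)
      hence "l * ((g u - g us) - (f u - f us)) \<le> g u - g us" using 1 gu by (simp add: field_simps)
      thus ?thesis using eq by (simp add: algebra_simps)
    next
      case 2
      have fu: "f u > f us" using b 2 by force
      have "(g us - g u) / ((f u - f us) - (g u - g us)) \<in> L" using 2 L_def by auto
      hence "(g us - g u) / ((f u - f us) - (g u - g us)) \<le> l" by (rule lge)
      hence "g us - g u \<le> l * ((f u - f us) - (g u - g us))" using 2 fu by (simp add: field_simps)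
      thus ?thesis using eq by (simp add: algebra_simps)
    next
      case 3
      have "l * f us + (1 - l) * g us \<le> l * f u + (1 - l) * g u"
        using 3 lpos l1 by (intro add_mono mult_left_mono) auto
      thus ?thesis using eq by (simp add: algebra_simps)
    qed
  qed
  thus ?thesis using lpos l1 by blast
qed

theorem corollary1:
  fixes nF N :: nat
    and P :: "nat \<Rightarrow> nat \<Rightarrow> nat \<Rightarrow> real"
    and q :: "nat \<Rightarrow> real"
    and F :: "real^'n \<Rightarrow> real^'m \<Rightarrow> real^'n"
    and sigma0 :: "real^'n \<Rightarrow> real^'m \<Rightarrow> real"
    and sigma1 :: "real^'n \<Rightarrow> real"
    and g0 :: "nat \<Rightarrow> nat \<Rightarrow> real"
    and U :: "real^'n \<Rightarrow> (real^'m) set"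
    and x :: "real^'n" and s :: nat and a0 :: nat and us :: "real^'m"
  defines "h \<equiv> hfun nF P q F sigma0 sigma1 g0 x s"
  assumes stoch: "\<forall>a\<in>{1..N}. row_stochastic nF (P a)"
    and q01: "\<forall>i\<in>{1..nF}. 0 \<le> q i \<and> q i \<le> 1"
    and s_in: "s \<in> {1..nF}"
    and reg: "\<forall>y::real^'n. \<forall>a\<in>{1..N}.
        continuous_on UNIV (\<lambda>u. Sig sigma0 sigma1 g0 y s (F y 0) u a) \<and>
        coercive (\<lambda>u. Sig sigma0 sigma1 g0 y s (F y 0) u a) \<and>
        convex_on UNIV (\<lambda>u. Sig sigma0 sigma1 g0 y s (F y 0) u a) \<and>
        continuous_on UNIV (\<lambda>u. Sig sigma0 sigma1 g0 y s (F y u) u a) \<and>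
        coercive (\<lambda>u. Sig sigma0 sigma1 g0 y s (F y u) u a) \<and>
        convex_on UNIV (\<lambda>u. Sig sigma0 sigma1 g0 y s (F y u) u a)"
    and U_compact: "compact (U x)"
    and U_opt: "\<forall>u. (SUP p\<in>simplexN N. payoff N h p u) = (INF v. SUP p\<in>simplexN N. payoff N h p v)
                   \<longrightarrow> u \<in> U x"
    and U_J1: "(INF u. SUP p\<in>simplexN N. payoff N h p u) = (INF u\<in>U x. SUP p\<in>simplexN N. payoff N h p u)"
    and U_minimax: "(INF u\<in>U x. SUP p\<in>simplexN N. payoff N h p u) = (SUP p\<in>simplexN N. INF u\<in>U x. payoff N h p u)"
    and U_J2: "(SUP p\<in>simplexN N. INF u\<in>U x. payoff N h p u) = (SUP p\<in>simplexN N. INF u. payoff N h p u)"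
    and a0_in: "a0 \<in> {1..N}" and a0_ne: "a0 \<noteq> 1"
    and order: "\<forall>j\<in>{1..N} - {a0}. \<forall>k\<in>{1..N} - {a0}. j < k \<longrightarrow>
                  (\<forall>u\<in>interior (U x). h j u > h k u)"
    and us_in: "us \<in> interior (U x)"
    and cond_a: "h 1 us = h a0 us"
    and cond_b: "\<forall>u. u \<noteq> us \<longrightarrow> h 1 u > h 1 us \<or> h a0 u > h a0 us"
    and cond_c: "\<not> (\<forall>u. h 1 us \<le> h 1 u) \<and> \<not> (\<forall>u. h a0 us \<le> h a0 u)"
  shows "\<exists>ps. saddle_point N h us ps \<and> non_pure N ps \<and> supported_on ps {1, a0}"
proof -
  have N2: "1 \<in> {1..N}" using a0_in by auto
  have Pq01: "0 \<le> Pq nF P q i s \<and> Pq nF P q i s \<le> 1" if iN: "i \<in> {1..N}" for i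
  proof -
    have rs: "row_stochastic nF (P i)" using stoch iN by blast
    have nn: "\<forall>j\<in>{1..nF}. 0 \<le> P i s j" and s1: "(\<Sum>j\<in>{1..nF}. P i s j) = 1"
      using rs s_in unfolding row_stochastic_def by auto
    have "0 \<le> Pq nF P q i s" unfolding Pq_def using nn q01 by (intro sum_nonneg) auto
    moreover have "Pq nF P q i s \<le> (\<Sum>j\<in>{1..nF}. P i s j)" unfolding Pq_def
      using nn q01 by (intro sum_mono) (simp add: mult_left_le)
    ultimately show ?thesis using s1 by simp
  qed
  have cvx: "convex_on UNIV (h i)" if iN: "i \<in> {1..N}" for i
  proof -
    have r: "convex_on UNIV (\<lambda>u. Sig sigma0 sigma1 g0 x s (F x 0) u i)"
            "convex_on UNIV (\<lambda>u. Sig sigma0 sigma1 g0 x s (F x u) u i)" using reg iN by blast+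
    have "convex_on UNIV (\<lambda>u. Pq nF P q i s * Sig sigma0 sigma1 g0 x s (F x u) u i
              + (1 - Pq nF P q i s) * Sig sigma0 sigma1 g0 x s (F x 0) u i)"
      using Pq01[OF iN] r by (intro convex_on_add convex_on_cmul) auto
    thus ?thesis unfolding h_def hfun_def by simp
  qed
  obtain l where l: "0 < l" "l < 1" "\<forall>u. h 1 us \<le> l * h 1 u + (1 - l) * h a0 u"
    using key[OF cvx[OF N2] cvx[OF a0_in] cond_a cond_b cond_c] by blast
  define ps where "ps = (\<lambda>i::nat. if i = 1 then l else if i = a0 then 1 - l else 0)"
  have sumps: "(\<Sum>i\<in>{1..N}. ps i * k i) = l * k 1 + (1 - l) * k a0" for k :: "nat \<Rightarrow> real"
  proof -
    have "(\<Sum>i\<in>{1..N}. ps i * k i) = ps 1 * k 1 + (\<Sum>i\<in>{1..N} - {1}. ps i * k i)"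
      using N2 by (intro sum.remove) auto
    also have "(\<Sum>i\<in>{1..N} - {1}. ps i * k i) = ps a0 * k a0 + (\<Sum>i\<in>{1..N} - {1} - {a0}. ps i * k i)"
      using a0_in a0_ne by (intro sum.remove) auto
    also have "(\<Sum>i\<in>{1..N} - {1} - {a0}. ps i * k i) = 0"
      by (intro sum.neutral) (auto simp: ps_def)
    finally show ?thesis using a0_ne by (simp add: ps_def)
  qed
  have psS: "ps \<in> simplexN N"
    unfolding simplexN_def using l a0_in a0_ne sumps[of "\<lambda>_. 1"] by (auto simp: ps_def)
  have hmax: "h i us \<le> h 1 us" if iN: "i \<in> {1..N}" for i
  proof (cases "i = 1 \<or> i = a0")
    case True thus ?thesis using cond_a by auto
  next
    case False
    hence "1 \<in> {1..N} - {a0}" "i \<in> {1..N} - {a0}" "1 < i" using iN a0_ne N2 by auto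
    thus ?thesis using order us_in by fastforce
  qed
  have pay_ps: "payoff N h ps u = l * h 1 u + (1 - l) * h a0 u" for u
    unfolding payoff_def by (rule sumps)
  have sp: "saddle_point N h us ps"
    unfolding saddle_point_def
  proof (intro conjI ballI allI psS)
    fix p u assume pS: "p \<in> simplexN N"
    have "payoff N h p us \<le> (\<Sum>i\<in>{1..N}. p i * h 1 us)"
      unfolding payoff_def using pS hmax
      by (intro sum_mono mult_left_mono) (auto simp: simplexN_def)
    also have "\<dots> = h 1 us" using pS by (simp add: simplexN_def sum_distrib_right[symmetric])
    also have "\<dots> = payoff N h ps us" using cond_a by (simp add: pay_ps algebra_simps)
    finally show "payoff N h p us \<le> payoff N h ps us" .
    show "payoff N h ps us \<le> payoff N h ps u" using l(3) cond_a
      by (simp add: pay_ps algebra_simps)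
  qed
  have "{i\<in>{1..N}. 0 < ps i} = {1, a0}" using l a0_in a0_ne N2 by (auto simp: ps_def)
  hence np: "non_pure N ps" unfolding non_pure_def using a0_ne by simp
  have "supported_on ps {1, a0}" unfolding supported_on_def ps_def by auto
  thus ?thesis using sp np by blast
qed

end
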